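(* Let $X$ be a complete metric space, $\mathcal Z_{\mathcal S}=(X,(\phi_j)_{j=0}^{n-1},(\rho_j)_{j=0}^{n-1})$ a Matkowski contractive GIFZS of degree $m$ with fuzzy attractor $u_{\mathcal Z}$, $\mathcal S=(X,(\phi_j)_{j=0}^{n-1})$ with attractor $A_{\mathcal S}$, $I=\{j:\rho_j(1)=1\}$, and $\mathcal S'=(X,(\phi_j)_{j\in I})$ with attractor $A_{\mathcal S'}$. Then: (1) $[u_{\mathcal Z}]^0\subseteq A_{\mathcal S}$, and if $r_+^j=0$ for all $j$, then $[u_{\mathcal Z}]^0=A_{\mathcal S}$; (2) $A_{\mathcal S'}\subseteq[u_{\mathcal Z}]^1$, and if $\beta_j(1)=1$ for all $j\in I$, then $A_{\mathcal S'}=[u_{\mathcal Z}]^1$; (3) if $I=\{0,\dots,n-1\}$, then $u_{\mathcal Z}=\chi_{A_{\mathcal S}}$.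
   Context: A fuzzy subset of $X$ is $u:X\to[0,1]$. For $\alpha\in(0,1]$, $[u]^\alpha=\{x:u(x)\ge\alpha\}$, $[u]^0=\overline{\{x:u(x)>0\}}$. $\mathcal F_X^*$: fuzzy subsets that are normal, usc and compactly supported. $\chi_A$ is the indicator function of $A$. $X^m$ has the maximum metric $d^m$. For $T:Z\to Y$, $T(u)(y)=\sup\{u(z):T(z)=y\}$ if $y\in T(Z)$, else $0$; $\rho(u)=\rho\circ u$; $(u_0\times\cdots\times u_{m-1})(x_0,\dots,x_{m-1})=\min_iu_i(x_i)$; $\vee$ is pointwise max. A family $(\rho_j)$ of maps $[0,1]\to[0,1]$ is admissible if each is nondecreasing, right continuous, $\rho_j(0)=0$, and $\rho_j(1)=1$ for some $j$. For each $j$: $r_+^j=\inf\{t:\rho_j(t)>0\}$ and $\beta_j(\alpha)=\inf\{t\in[0,1]:\rho_j(t)\ge\alpha\}$ for $\alpha\in[0,\rho_j(1)]$. A GIFS of degree $m$ is $(X,(\phi_j))$ with continuous $\phi_j:X^m\to X$; it is Matkowski contractive if each $\phi_j$ satisfies $d(\phi_j(x),\phi_j(y))\le\varphi_j(d^m(x,y))$ for some nondecreasing $\varphi_j$ with $\varphi_j^{(k)}(t)\to0$ for all $t>0$; on complete $X$ its attractor is the unique nonempty compact $A$ with $A=\bigcup_j\phi_j(A\times\cdots\times A)$. A GIFZS $(X,(\phi_j),(\rho_j))$ consists of such a GIFS and an admissible $(\rho_j)$; its operator is $\mathcal Z_{\mathcal S}(u_0,\dots,u_{m-1})=\bigvee_j\rho_j(\phi_j(u_0\times\cdots\times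 u_{m-1}))$, and its fuzzy attractor is the unique $u_{\mathcal Z}\in\mathcal F_X^*$ with $\mathcal Z_{\mathcal S}(u_{\mathcal Z},\dots,u_{\mathcal Z})=u_{\mathcal Z}$. *)

theory Defs
  imports "HOL-Analysis.Analysis"
begin

text \<open>Points of X^m are lists of length m; fuzzy subsets are real-valued maps with values in [0,1].\<close>

definition tuples :: "nat \<Rightarrow> 'a set \<Rightarrow> 'a list set" where
  "tuples m A = {xs. length xs = m \<and> set xs \<subseteq> A}"

definition dmax :: "'a::metric_space list \<Rightarrow> 'a list \<Rightarrow> real" where
  "dmax xs ys = Max (insert 0 {dist (xs ! i) (ys ! i) | i. i < length xs})"

definition fuzzy :: "('a \<Rightarrow> real) \<Rightarrow> bool" where
  "fuzzy u \<longleftrightarrow> (\<forall>x. 0 \<le> u x \<and> u x \<le> 1)"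

definition cut :: "('a::topological_space \<Rightarrow> real) \<Rightarrow> real \<Rightarrow> 'a set" where
  "cut u \<alpha> = (if \<alpha> = 0 then closure {x. u x > 0} else {x. \<alpha> \<le> u x})"

definition usc :: "('a::metric_space \<Rightarrow> real) \<Rightarrow> bool" where
  "usc u \<longleftrightarrow> (\<forall>x. \<forall>e>0. \<exists>d>0. \<forall>y. dist y x < d \<longrightarrow> u y < u x + e)"

definition FX :: "('a::metric_space \<Rightarrow> real) set" where
  "FX = {u. fuzzy u \<and> (\<exists>x. u x = 1) \<and> usc u \<and> compact (cut u 0)}"

definition fimg :: "('z \<Rightarrow> 'y) \<Rightarrow> 'z set \<Rightarrow> ('z \<Rightarrow> real) \<Rightarrow> 'y \<Rightarrow> real" where
  "fimg T Z u y = (if y \<in> T ` Z then Sup {u z | z. z \<in> Z \<and> T z = y} else 0)"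

definition fprod :: "('a \<Rightarrow> real) list \<Rightarrow> 'a list \<Rightarrow> real" where
  "fprod us xs = Min {(us ! i) (xs ! i) | i. i < length us}"

definition admissible :: "nat \<Rightarrow> (nat \<Rightarrow> real \<Rightarrow> real) \<Rightarrow> bool" where
  "admissible n \<rho> \<longleftrightarrow>
     (\<forall>j<n. (\<forall>t\<in>{0..1}. \<rho> j t \<in> {0..1})
        \<and> mono_on {0..1} (\<rho> j)
        \<and> (\<forall>t\<in>{0..<1}. continuous (at t within {t..1}) (\<rho> j))
        \<and> \<rho> j 0 = 0)
     \<and> (\<exists>j<n. \<rho> j 1 = 1)"

definition r_plus :: "(real \<Rightarrow> real) \<Rightarrow> real" where
  "r_plus r = (if {t\<in>{0..1}. r t > 0} = {} then 1 else Inf {t\<in>{0..1}. r t > 0})"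

definition beta :: "(real \<Rightarrow> real) \<Rightarrow> real \<Rightarrow> real" where
  "beta r \<alpha> = Inf {t\<in>{0..1}. r t \<ge> \<alpha>}"

definition continuous_m :: "nat \<Rightarrow> ('a::metric_space list \<Rightarrow> 'b::metric_space) \<Rightarrow> bool" where
  "continuous_m m f \<longleftrightarrow> (\<forall>xs\<in>tuples m UNIV. \<forall>e>0. \<exists>d>0. \<forall>ys\<in>tuples m UNIV.
       dmax xs ys < d \<longrightarrow> dist (f xs) (f ys) < e)"

definition matkowski :: "nat \<Rightarrow> ('a::metric_space list \<Rightarrow> 'a) \<Rightarrow> bool" where
  "matkowski m f \<longleftrightarrow> (\<exists>\<psi>::real \<Rightarrow> real. mono_on {0..} \<psi> \<and> \<psi> ` {0..} \<subseteq> {0..}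
       \<and> (\<forall>t>0. (\<lambda>k. (\<psi> ^^ k) t) \<longlonglongrightarrow> 0)
       \<and> (\<forall>xs\<in>tuples m UNIV. \<forall>ys\<in>tuples m UNIV. dist (f xs) (f ys) \<le> \<psi> (dmax xs ys)))"

definition mgifs :: "nat \<Rightarrow> nat set \<Rightarrow> (nat \<Rightarrow> 'a::metric_space list \<Rightarrow> 'a) \<Rightarrow> bool" where
  "mgifs m J \<phi> \<longleftrightarrow> (\<forall>j\<in>J. continuous_m m (\<phi> j) \<and> matkowski m (\<phi> j))"

definition gifs_attractor :: "nat \<Rightarrow> nat set \<Rightarrow> (nat \<Rightarrow> 'a::metric_space list \<Rightarrow> 'a) \<Rightarrow> 'a set \<Rightarrow> bool" where
  "gifs_attractor m J \<phi> A \<longleftrightarrow> A \<noteq> {} \<and> compact A \<and> A = (\<Union>j\<in>J. \<phi> j ` tuples m A)"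

definition gifzs_op :: "nat \<Rightarrow> nat \<Rightarrow> (nat \<Rightarrow> 'a list \<Rightarrow> 'a) \<Rightarrow> (nat \<Rightarrow> real \<Rightarrow> real)
    \<Rightarrow> ('a \<Rightarrow> real) list \<Rightarrow> 'a \<Rightarrow> real" where
  "gifzs_op m n \<phi> \<rho> us x = Max {\<rho> j (fimg (\<phi> j) (tuples m UNIV) (fprod us) x) | j. j < n}"

definition fuzzy_attractor :: "nat \<Rightarrow> nat \<Rightarrow> (nat \<Rightarrow> 'a::metric_space list \<Rightarrow> 'a) \<Rightarrow> (nat \<Rightarrow> real \<Rightarrow> real)
    \<Rightarrow> ('a \<Rightarrow> real) \<Rightarrow> bool" where
  "fuzzy_attractor m n \<phi> \<rho> u \<longleftrightarrow> u \<in> FX \<and> gifzs_op m n \<phi> \<rho> (replicate m u) = u"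

end

theory Submission
  imports Defs
begin

lemma dmax_nonneg: "0 \<le> dmax xs ys"
  unfolding dmax_def by (rule Max_ge) auto

lemma dmax_le:
  assumes "0 \<le> d" "\<forall>i<length xs. dist (xs!i) (ys!i) \<le> d"
  shows "dmax xs ys \<le> d"
  unfolding dmax_def using assms by (subst Max_le_iff) auto

lemma dmax_less:
  assumes "0 < d" "\<forall>i<length xs. dist (xs!i) (ys!i) < d"
  shows "dmax xs ys < d"
  unfolding dmax_def using assms by (subst Max_less_iff) auto

lemma psi_less:
  fixes \<psi> :: "real \<Rightarrow> real"
  assumes mono: "mono_on {0..} \<psi>" and lim: "\<forall>t>0. (\<lambda>k. (\<psi> ^^ k) t) \<longlonglongrightarrow> 0" and t: "t > 0"
  shows "\<psi> t < t"
proof (rule ccontr)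
  assume "\<not> \<psi> t < t" hence ge: "t \<le> \<psi> t" by simp
  have all: "t \<le> (\<psi>^^k) t" for k
  proof (induction k)
    case 0 show ?case by simp
  next
    case (Suc k)
    have "\<psi> t \<le> \<psi> ((\<psi>^^k) t)" using Suc t by (intro mono_onD[OF mono]) auto
    then show ?case using ge by simp
  qed
  have "t \<le> 0" using LIMSEQ_le_const[OF lim[rule_format, OF t]] all by blast
  with t show False by simp
qed

lemma tuples_nth: "z \<in> tuples m P \<Longrightarrow> i < m \<Longrightarrow> z ! i \<in> P"
  unfolding tuples_def by auto

lemma tuples_mono: "P \<subseteq> Q \<Longrightarrow> tuples m P \<subseteq> tuples m Q"
  unfolding tuples_def by auto

lemma tuples_map: "(\<forall>y\<in>set z. g y \<in> Q) \<Longrightarrow> length z = m \<Longrightarrow> map g z \<in> tuples m Q"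
  unfolding tuples_def by auto

lemma attr_sub:
  fixes \<phi> :: "nat \<Rightarrow> 'a::metric_space list \<Rightarrow> 'a"
  assumes mat: "\<forall>j\<in>J. matkowski m (\<phi> j)"
    and P: "compact P" and Q: "compact Q" "Q \<noteq> {}"
    and PH: "P \<subseteq> (\<Union>j\<in>J. \<phi> j ` tuples m P)"
    and QH: "(\<Union>j\<in>J. \<phi> j ` tuples m Q) \<subseteq> Q"
  shows "P \<subseteq> Q"
proof (cases "P = {}")
  case True thus ?thesis by simp
next
  case False
  have cont: "continuous_on P (\<lambda>x. infdist x Q)" by (intro continuous_intros)
  obtain x0 where x0: "x0 \<in> P" "\<forall>x\<in>P. infdist x Q \<le> infdist x0 Q"
    using continuous_attains_sup[OF P False cont] by auto
  define \<delta> where "\<delta> = infdist x0 Q"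
  have near: "\<exists>q\<in>Q. dist w q \<le> infdist w Q" for w
  proof -
    have "continuous_on Q (dist w)" by (intro continuous_intros)
    then obtain q where q: "q \<in> Q" "\<forall>y\<in>Q. dist w q \<le> dist w y"
      using continuous_attains_inf[OF Q(1) Q(2)] by blast
    have "dist w q \<le> infdist w Q" unfolding infdist_notempty[OF Q(2)]
      using q Q(2) by (intro cINF_greatest) auto
    with q show ?thesis by blast
  qed
  have "\<delta> \<le> 0"
  proof (rule ccontr)
    assume "\<not> \<delta> \<le> 0" hence dpos: "\<delta> > 0" by simp
    from x0(1) PH obtain j z where j: "j \<in> J" and z: "z \<in> tuples m P" and x0z: "x0 = \<phi> j z" by auto
    define a where "a = map (\<lambda>w. SOME q. q \<in> Q \<and> dist w q \<le> infdist w Q) z"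
    have sm: "(SOME q. q \<in> Q \<and> dist w q \<le> infdist w Q) \<in> Q \<and> dist w (SOME q. q \<in> Q \<and> dist w q \<le> infdist w Q) \<le> infdist w Q" for w
      using someI_ex[OF near[of w, unfolded Bex_def]] by blast
    have lz: "length z = m" using z unfolding tuples_def by auto
    have aQ: "a \<in> tuples m Q" unfolding a_def using sm lz by (intro tuples_map) auto
    have "dmax z a \<le> \<delta>"
    proof (rule dmax_le)
      show "0 \<le> \<delta>" using dpos by simp
      show "\<forall>i<length z. dist (z ! i) (a ! i) \<le> \<delta>"
      proof (intro allI impI)
        fix i assume i: "i < length z"
        have "z ! i \<in> P" using z i lz by (auto intro: tuples_nth)
        hence "infdist (z!i) Q \<le> \<delta>" using x0 \<delta>_def by auto
        moreover have "dist (z!i) (a!i) \<le> infdist (z!i) Q" using sm i unfolding a_def by simp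
        ultimately show "dist (z ! i) (a ! i) \<le> \<delta>" by simp
      qed
    qed
    from mat j obtain \<psi> :: "real \<Rightarrow> real" where psi: "mono_on {0..} \<psi>" "\<psi> ` {0..} \<subseteq> {0..}"
       "\<forall>t>0. (\<lambda>k. (\<psi> ^^ k) t) \<longlonglongrightarrow> 0"
       "\<forall>xs\<in>tuples m UNIV. \<forall>ys\<in>tuples m UNIV. dist (\<phi> j xs) (\<phi> j ys) \<le> \<psi> (dmax xs ys)"
      unfolding matkowski_def by blast
    have "z \<in> tuples m UNIV" "a \<in> tuples m UNIV" using z aQ tuples_mono[of P UNIV] tuples_mono[of Q UNIV] by blast+
    hence "dist (\<phi> j z) (\<phi> j a) \<le> \<psi> (dmax z a)" using psi(4) by blast
    also have "\<dots> \<le> \<psi> \<delta>" using \<open>dmax z a \<le> \<delta>\<close> dmax_nonneg[of z a] dpos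
      by (intro mono_onD[OF psi(1)]) auto
    also have "\<dots> < \<delta>" using psi_less[OF psi(1) psi(3) dpos] .
    finally have lt: "dist x0 (\<phi> j a) < \<delta>" using x0z by simp
    have "\<phi> j a \<in> Q" using QH j aQ by blast
    hence "infdist x0 Q \<le> dist x0 (\<phi> j a)" by (rule infdist_le)
    with lt \<delta>_def show False by simp
  qed
  show ?thesis
  proof
    fix x assume x: "x \<in> P"
    have "infdist x Q \<le> \<delta>" using x0 x \<delta>_def by blast
    hence "infdist x Q = 0" using \<open>\<delta> \<le> 0\<close> infdist_nonneg[of x Q] by linarith
    hence "x \<in> closure Q" using in_closure_iff_infdist_zero[OF Q(2)] by simp
    thus "x \<in> Q" using Q(1) compact_imp_closed closure_closed by metis
  qed
qed

lemma subseq_tuples: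
  fixes f :: "nat \<Rightarrow> nat \<Rightarrow> 'a::metric_space"
  assumes K: "compact K" and f: "\<forall>k. \<forall>i<m. f k i \<in> K"
  shows "\<exists>r l. strict_mono r \<and> (\<forall>i<m. l i \<in> K \<and> (\<lambda>k. f (r k) i) \<longlonglongrightarrow> l i)"
  using f
proof (induction m)
  case 0
  show ?case by (rule exI[of _ id]) (auto simp: strict_mono_def)
next
  case (Suc m)
  then obtain r l where r: "strict_mono r" "\<forall>i<m. l i \<in> K \<and> (\<lambda>k. f (r k) i) \<longlonglongrightarrow> l i"
    by auto
  have "\<forall>k. f (r k) m \<in> K" using Suc.prems by auto
  then obtain l' r' where l': "l' \<in> K" "strict_mono r'" "((\<lambda>k. f (r k) m) \<circ> r') \<longlonglongrightarrow> l'"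
    using compact_imp_seq_compact[OF K] unfolding seq_compact_def by metis
  show ?case
  proof (intro exI conjI allI impI)
    show "strict_mono (r \<circ> r')" using r(1) l'(2) by (rule strict_mono_o)
    fix i assume i: "i < Suc m"
    show "(l(m := l')) i \<in> K" using i r(2) l'(1) by (cases "i = m") auto
    show "(\<lambda>k. f ((r \<circ> r') k) i) \<longlonglongrightarrow> (l(m := l')) i"
    proof (cases "i = m")
      case True thus ?thesis using l'(3) by (simp add: comp_def)
    next
      case False
      hence "(\<lambda>k. f (r k) i) \<longlonglongrightarrow> l i" using i r(2) by auto
      from LIMSEQ_subseq_LIMSEQ[OF this l'(2)] False show ?thesis by (simp add: comp_def)
    qed
  qed
qed

lemma seq_cont:
  assumes f: "continuous_m m f" and z: "z \<in> tuples m UNIV" and w: "\<forall>k. w k \<in> tuples m UNIV"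
    and lim: "\<forall>i<m. (\<lambda>k. w k ! i) \<longlonglongrightarrow> z ! i"
  shows "(\<lambda>k. f (w k)) \<longlonglongrightarrow> f z"
proof (rule tendstoI)
  fix e :: real assume e: "e > 0"
  obtain d where d: "d > 0" "\<forall>ys\<in>tuples m UNIV. dmax z ys < d \<longrightarrow> dist (f z) (f ys) < e"
    using f z e unfolding continuous_m_def by blast
  have "\<forall>i\<in>{..<m}. eventually (\<lambda>k. dist (w k ! i) (z ! i) < d) sequentially"
    using lim d(1) by (auto intro: tendstoD)
  hence ev: "eventually (\<lambda>k. \<forall>i\<in>{..<m}. dist (w k ! i) (z ! i) < d) sequentially"
    by (intro eventually_ball_finite) auto
  show "eventually (\<lambda>k. dist (f (w k)) (f z) < e) sequentially"
    using ev
  proof eventually_elim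
    case (elim k)
    have lz: "length z = m" using z unfolding tuples_def by auto
    have "dmax z (w k) < d" using elim d(1) lz by (intro dmax_less) (auto simp: dist_commute)
    thus ?case using d(2) w by (auto simp: dist_commute)
  qed
qed

lemma closed_img:
  fixes f :: "'a::metric_space list \<Rightarrow> 'b::metric_space"
  assumes K: "compact K" and f: "continuous_m m f"
  shows "closed (f ` tuples m K)"
  unfolding closed_sequential_limits
proof (intro allI impI, elim conjE)
  fix y l assume y: "\<forall>n. y n \<in> f ` tuples m K" and yl: "y \<longlonglongrightarrow> l"
  have "\<forall>k. \<exists>z. z \<in> tuples m K \<and> y k = f z" using y by blast
  then obtain zs where zs: "\<forall>k. zs k \<in> tuples m K \<and> y k = f (zs k)" by metis
  have "\<forall>k. \<forall>i<m. zs k ! i \<in> K" using zs by (auto intro: tuples_nth)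
  from subseq_tuples[OF K this] obtain r lm where
    r: "strict_mono r" "\<forall>i<m. lm i \<in> K \<and> (\<lambda>k. zs (r k) ! i) \<longlonglongrightarrow> lm i" by blast
  define z where "z = map lm [0..<m]"
  have zK: "z \<in> tuples m K" using r(2) unfolding z_def tuples_def by auto
  have zU: "z \<in> tuples m UNIV" "\<forall>k. zs (r k) \<in> tuples m UNIV" using zK zs unfolding tuples_def by auto
  have "(\<lambda>k. f (zs (r k))) \<longlonglongrightarrow> f z"
    using r(2) unfolding z_def by (intro seq_cont[OF f zU[unfolded z_def]]) auto
  moreover have "(\<lambda>k. f (zs (r k))) \<longlonglongrightarrow> l"
    using LIMSEQ_subseq_LIMSEQ[OF yl r(1)] zs by (simp add: comp_def)
  ultimately have "l = f z" using LIMSEQ_unique by blast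
  thus "l \<in> f ` tuples m K" using zK by blast
qed

theorem mainTheorem16:
  fixes \<phi> :: "nat \<Rightarrow> 'a::complete_space list \<Rightarrow> 'a"
    and \<rho> :: "nat \<Rightarrow> real \<Rightarrow> real"
    and m n :: nat
    and u :: "'a \<Rightarrow> real"
    and A A' :: "'a set"
  assumes "m \<ge> 1"
    and "mgifs m {..<n} \<phi>"
    and "admissible n \<rho>"
    and "fuzzy_attractor m n \<phi> \<rho> u"
    and "gifs_attractor m {..<n} \<phi> A"
    and "gifs_attractor m {j. j < n \<and> \<rho> j 1 = 1} \<phi> A'"
  shows "(cut u 0 \<subseteq> A \<and> ((\<forall>j<n. r_plus (\<rho> j) = 0) \<longrightarrow> cut u 0 = A))
       \<and> (A' \<subseteq> cut u 1 \<and> ((\<forall>j<n. \<rho> j 1 = 1 \<longrightarrow> beta (\<rho> j) 1 = 1) \<longrightarrow> A' = cut u 1))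
       \<and> ({j. j < n \<and> \<rho> j 1 = 1} = {..<n} \<longrightarrow> u = indicator A)"
proof -
  note m1 = assms(1)
  have cont: "\<And>j. j < n \<Longrightarrow> continuous_m m (\<phi> j)" and
    mat: "\<forall>j\<in>{..<n}. matkowski m (\<phi> j)"
    using assms(2) unfolding mgifs_def by auto
  have matI: "\<forall>j\<in>{j. j < n \<and> \<rho> j 1 = 1}. matkowski m (\<phi> j)" using mat by auto
  have rho01: "\<And>j t. j < n \<Longrightarrow> 0 \<le> t \<Longrightarrow> t \<le> 1 \<Longrightarrow> 0 \<le> \<rho> j t \<and> \<rho> j t \<le> 1"
    and rhomono: "\<And>j. j < n \<Longrightarrow> mono_on {0..1} (\<rho> j)"
    and rho0: "\<And>j. j < n \<Longrightarrow> \<rho> j 0 = 0"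
    and npos: "n > 0"
    using assms(3) unfolding admissible_def by auto
  have uFX: "u \<in> FX" and ufix: "gifzs_op m n \<phi> \<rho> (replicate m u) = u"
    using assms(4) unfolding fuzzy_attractor_def by auto
  have u01: "\<And>x. 0 \<le> u x \<and> u x \<le> 1" using uFX unfolding FX_def fuzzy_def by auto
  obtain x1 where x1: "u x1 = 1" using uFX unfolding FX_def by auto
  have uusc: "usc u" using uFX unfolding FX_def by auto
  define S where "S = {x. 0 < u x}"
  define K where "K = closure S"
  define C where "C = {x. 1 \<le> u x}"
  have cut0: "cut u 0 = K" unfolding cut_def K_def S_def by simp
  have cut1: "cut u 1 = C" unfolding cut_def C_def by simp
  have Kc: "compact K" using uFX cut0 unfolding FX_def by auto
  have SK: "S \<subseteq> K" unfolding K_def by (rule closure_subset)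
  have x1S: "x1 \<in> S" unfolding S_def using x1 by simp
  have Kne: "K \<noteq> {}" using x1S SK by blast
  define T where "T = tuples m (UNIV::'a set)"
  define F where "F = fprod (replicate m u)"
  define V where "V j x = fimg (\<phi> j) T F x" for j x
  have Fmin: "F z = Min {u (z!i) | i. i < m}" for z
  proof -
    have "{(replicate m u ! i) (z ! i) |i. i < length (replicate m u)} = {u (z!i) | i. i < m}"
      by auto (metis nth_replicate)
    thus ?thesis unfolding F_def fprod_def by simp
  qed
  have finm: "finite {u (z!i) | i. i < m}" and nem: "{u (z!i) | i. i < m} \<noteq> {}" for z :: "'a list"
    using m1 by (auto intro!: exI[of _ 0])
  have Fgt: "c < F z \<longleftrightarrow> (\<forall>i<m. c < u (z!i))" for c z
    unfolding Fmin using finm[of z] nem[of z] by (subst Min_gr_iff) auto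
  have Fge: "c \<le> F z \<longleftrightarrow> (\<forall>i<m. c \<le> u (z!i))" for c z
    unfolding Fmin using finm[of z] nem[of z] by (subst Min_ge_iff) auto
  have F01: "0 \<le> F z \<and> F z \<le> 1" for z
  proof -
    have "0 \<le> F z" using Fge u01 by auto
    moreover have "u (z!0) \<le> 1" using u01 by auto
    hence "\<not> 1 < F z" using Fgt[of 1 z] m1 by force
    ultimately show ?thesis by simp
  qed
  define Sx where "Sx j x = {F z | z. z \<in> T \<and> \<phi> j z = x}" for j x
  have Vdef: "V j x = (if x \<in> \<phi> j ` T then Sup (Sx j x) else 0)" for j x
    unfolding V_def fimg_def Sx_def by simp
  have bdd: "bdd_above (Sx j x)" for j x unfolding Sx_def using F01 by (intro bdd_aboveI[of _ 1]) auto
  have Vub: "z \<in> T \<Longrightarrow> \<phi> j z = x \<Longrightarrow> F z \<le> V j x" for z j x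
    unfolding Vdef using bdd by (auto simp: Sx_def intro!: cSup_upper)
  have V01: "0 \<le> V j x \<and> V j x \<le> 1" for j x
  proof (cases "x \<in> \<phi> j ` T")
    case True
    then obtain z where z: "z \<in> T" "\<phi> j z = x" by auto
    have ne: "Sx j x \<noteq> {}" using z unfolding Sx_def by auto
    have "0 \<le> V j x" using Vub[OF z] F01[of z] by simp
    moreover have "V j x \<le> 1" unfolding Vdef using True ne F01
      by (auto simp: Sx_def intro!: cSup_least)
    ultimately show ?thesis by simp
  qed (simp add: Vdef)
  have Vlb: "0 \<le> c \<Longrightarrow> c < V j x \<Longrightarrow> \<exists>z\<in>T. \<phi> j z = x \<and> c < F z" for c j x
  proof -
    assume c: "0 \<le> c" "c < V j x"
    hence img: "x \<in> \<phi> j ` T" unfolding Vdef by (cases "x \<in> \<phi> j ` T") auto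
    hence ne: "Sx j x \<noteq> {}" unfolding Sx_def by auto
    have "c < Sup (Sx j x)" using c img unfolding Vdef by simp
    then obtain y where "y \<in> Sx j x" "c < y" using less_cSup_iff[OF ne bdd] by blast
    thus ?thesis unfolding Sx_def by auto
  qed
  have Vsub: "V j x = (if x \<in> \<phi> j ` T then Sup (Sx j x) else 0)" for j x using Vdef .
  have ueq: "u x = Max {\<rho> j (V j x) | j. j < n}" for x
    using fun_cong[OF ufix, of x] unfolding gifzs_op_def V_def F_def T_def by simp
  have finn: "finite {\<rho> j (V j x) | j. j < n}" for x by auto
  have uV: "j < n \<Longrightarrow> \<rho> j (V j x) \<le> u x" for j x
    unfolding ueq[of x] using finn by (intro Max_ge) auto
  have uex: "\<exists>j<n. u x = \<rho> j (V j x)" for x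
  proof -
    have "Max {\<rho> j (V j x) | j. j < n} \<in> {\<rho> j (V j x) | j. j < n}"
      using finn npos by (intro Max_in) auto
    thus ?thesis unfolding ueq[of x] by auto
  qed
  have Vpos: "j < n \<Longrightarrow> 0 < \<rho> j (V j x) \<Longrightarrow> 0 < V j x" for j x
    using V01[of j x] rho0[of j] by (cases "V j x = 0") auto
  have Tlen: "z \<in> T \<Longrightarrow> length z = m" for z unfolding T_def tuples_def by auto
  have inT: "z \<in> tuples m X \<Longrightarrow> z \<in> T" for z X unfolding T_def tuples_def by auto
  have setT: "z \<in> T \<Longrightarrow> (\<forall>i<m. z ! i \<in> X) \<Longrightarrow> z \<in> tuples m X" for z X
    unfolding T_def tuples_def by (auto simp: in_set_conv_nth)
  have Hclosed: "closed (\<Union>j\<in>J. \<phi> j ` tuples m X)" if "J \<subseteq> {..<n}" "compact X" for J X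
  proof -
    have "finite J" using that(1) finite_subset by blast
    moreover have "\<forall>j\<in>J. closed (\<phi> j ` tuples m X)" using that cont closed_img by blast
    ultimately show ?thesis by (intro closed_UN) auto
  qed
  have SH: "S \<subseteq> (\<Union>j\<in>{..<n}. \<phi> j ` tuples m S)"
  proof
    fix x assume "x \<in> S"
    then obtain j where j: "j < n" "0 < \<rho> j (V j x)" using uex[of x] unfolding S_def by force
    then obtain z where z: "z \<in> T" "\<phi> j z = x" "0 < F z" using Vlb[of 0 j x] Vpos by auto
    have "z \<in> tuples m S" using z Fgt[of 0 z] unfolding S_def by (intro setT) auto
    thus "x \<in> (\<Union>j\<in>{..<n}. \<phi> j ` tuples m S)" using j z by auto
  qed
  have KH: "K \<subseteq> (\<Union>j\<in>{..<n}. \<phi> j ` tuples m K)"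
  proof -
    have "K \<subseteq> closure (\<Union>j\<in>{..<n}. \<phi> j ` tuples m K)"
    proof -
      have "S \<subseteq> (\<Union>j\<in>{..<n}. \<phi> j ` tuples m K)" using SH tuples_mono[OF SK, of m] by blast
      thus ?thesis unfolding K_def[symmetric] by (simp add: K_def closure_mono)
    qed
    also have "\<dots> = (\<Union>j\<in>{..<n}. \<phi> j ` tuples m K)"
      using Hclosed[of "{..<n}" K] Kc by (simp add: closure_closed)
    finally show ?thesis .
  qed
  have Acomp: "compact A" "A \<noteq> {}" "A = (\<Union>j\<in>{..<n}. \<phi> j ` tuples m A)"
    using assms(5) unfolding gifs_attractor_def by auto
  have A'comp: "compact A'" "A' \<noteq> {}" "A' = (\<Union>j\<in>{j. j < n \<and> \<rho> j 1 = 1}. \<phi> j ` tuples m A')"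
    using assms(6) unfolding gifs_attractor_def by auto
  have P1a: "K \<subseteq> A"
    by (rule attr_sub[OF mat Kc Acomp(1,2) KH]) (use Acomp(3) in blast)
  have P1b: "K = A" if rp: "\<forall>j<n. r_plus (\<rho> j) = 0"
  proof -
    have rpos: "0 < \<rho> j t" if j: "j < n" and t: "0 < t" "t \<le> 1" for j t
    proof -
      define E where "E = {t\<in>{0..1}. \<rho> j t > 0}"
      have E: "E \<noteq> {}" "Inf E = 0" using rp j unfolding r_plus_def E_def by (auto split: if_splits)
      have "bdd_below E" unfolding E_def by (intro bdd_belowI[of _ 0]) auto
      then obtain t' where t': "t' \<in> E" "t' < t" using cInf_less_iff[OF E(1)] E(2) t by auto
      have "\<rho> j t' \<le> \<rho> j t" using t' t unfolding E_def by (intro mono_onD[OF rhomono[OF j]]) auto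
      thus ?thesis using t' unfolding E_def by auto
    qed
    have HK: "(\<Union>j\<in>{..<n}. \<phi> j ` tuples m K) \<subseteq> K"
    proof (rule UN_least, rule image_subsetI)
      fix j z assume j: "j \<in> {..<n}" and z: "z \<in> tuples m K"
      have lz: "length z = m" using z unfolding tuples_def by auto
      show "\<phi> j z \<in> K" unfolding K_def closure_approachable
      proof (intro allI impI)
        fix e :: real assume e: "e > 0"
        obtain d where d: "d > 0" "\<forall>ys\<in>tuples m UNIV. dmax z ys < d \<longrightarrow> dist (\<phi> j z) (\<phi> j ys) < e"
          using cont[of j] j z e inT[OF z] unfolding continuous_m_def T_def by blast
        have near: "\<exists>s\<in>S. dist s y < d" if "y \<in> K" for y
          using that d(1) unfolding K_def closure_approachable by blast
        define w where "w = map (\<lambda>y. SOME s. s \<in> S \<and> dist s y < d) z"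
        have sm: "(SOME s. s \<in> S \<and> dist s y < d) \<in> S \<and> dist (SOME s. s \<in> S \<and> dist s y < d) y < d"
          if "y \<in> K" for y using someI_ex[OF near[OF that, unfolded Bex_def]] .
        have zK: "\<forall>y\<in>set z. y \<in> K" using z unfolding tuples_def by auto
        have wS: "w \<in> tuples m S" unfolding w_def using sm zK lz by (intro tuples_map) auto
        have "dmax z w < d"
        proof (rule dmax_less[OF d(1)], intro allI impI)
          fix i assume i: "i < length z"
          have "z ! i \<in> K" using zK i by auto
          hence "dist (w ! i) (z ! i) < d" using sm i unfolding w_def by simp
          thus "dist (z ! i) (w ! i) < d" by (metis dist_commute)
        qed
        hence de: "dist (\<phi> j z) (\<phi> j w) < e" using d(2) wS unfolding tuples_def by auto
        have wT: "w \<in> T" using wS by (rule inT)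
        have "0 < F w" using Fgt[of 0 w] wS tuples_nth[OF wS] unfolding S_def by auto
        hence "0 < V j (\<phi> j w)" using Vub[OF wT refl, of j] by linarith
        hence "0 < \<rho> j (V j (\<phi> j w))" using rpos[of j] j V01 by auto
        hence "\<phi> j w \<in> S" using uV[of j "\<phi> j w"] j unfolding S_def by auto
        thus "\<exists>y\<in>S. dist y (\<phi> j z) < e" using de by (auto simp: dist_commute)
      qed
    qed
    have "A \<subseteq> K"
      by (rule attr_sub[OF mat Acomp(1) Kc Kne _ HK]) (use Acomp(3) in blast)
    with P1a show ?thesis by blast
  qed
  have Cclosed: "closed C" unfolding C_def
  proof -
    have "open {x. u x < 1}" unfolding open_dist
    proof (intro ballI)
      fix x assume "x \<in> {x. u x < 1}"
      hence ux: "u x < 1" by simp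
      obtain d where "d > 0" "\<forall>y. dist y x < d \<longrightarrow> u y < u x + (1 - u x)"
        using uusc ux unfolding usc_def by (meson diff_gt_0_iff_gt)
      thus "\<exists>e>0. \<forall>y. dist y x < e \<longrightarrow> y \<in> {x. u x < 1}" by auto
    qed
    moreover have "{x. 1 \<le> u x} = - {x. u x < 1}" by auto
    ultimately show "closed {x. 1 \<le> u x}" by (simp add: closed_def)
  qed
  have CS: "C \<subseteq> S" unfolding C_def S_def by auto
  have Cc: "compact C"
  proof -
    have "C = K \<inter> C" using CS SK by blast
    thus ?thesis using Kc Cclosed by (metis compact_Int_closed)
  qed
  have "x1 \<in> C" using x1 unfolding C_def by simp
  hence Cne: "C \<noteq> {}" by blast
  have HC: "(\<Union>j\<in>{j. j < n \<and> \<rho> j 1 = 1}. \<phi> j ` tuples m C) \<subseteq> C"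
  proof (rule UN_least, rule image_subsetI)
    fix j z assume j': "j \<in> {j. j < n \<and> \<rho> j 1 = 1}" and z: "z \<in> tuples m C"
    have j: "j < n" "\<rho> j 1 = 1" using j' by auto
    have zT: "z \<in> T" using z by (rule inT)
    have "1 \<le> F z" using Fge[of 1 z] tuples_nth[OF z] unfolding C_def by auto
    hence "V j (\<phi> j z) = 1" using Vub[OF zT refl, of j] V01[of j "\<phi> j z"] by linarith
    thus "\<phi> j z \<in> C" using uV[of j "\<phi> j z"] j unfolding C_def by simp
  qed
  have P2a: "A' \<subseteq> C"
    by (rule attr_sub[OF matI A'comp(1) Cc Cne _ HC]) (use A'comp(3) in blast)
  have P2b: "A' = C" if bt: "\<forall>j<n. \<rho> j 1 = 1 \<longrightarrow> beta (\<rho> j) 1 = 1"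
  proof -
    have CH: "C \<subseteq> (\<Union>j\<in>{j. j < n \<and> \<rho> j 1 = 1}. \<phi> j ` tuples m C)"
    proof
      fix x assume x: "x \<in> C"
      hence ux: "u x = 1" using u01[of x] unfolding C_def by auto
      obtain j where j: "j < n" "u x = \<rho> j (V j x)" using uex[of x] by auto
      have "\<rho> j (V j x) \<le> \<rho> j 1" using V01[of j x] by (intro mono_onD[OF rhomono[OF j(1)]]) auto
      hence r1: "\<rho> j 1 = 1" using rho01[of j 1] j ux by auto
      have Vx: "V j x = 1"
      proof -
        have "beta (\<rho> j) 1 \<le> V j x" unfolding beta_def
          using V01[of j x] j ux by (intro cInf_lower) (auto intro!: bdd_belowI[of _ 0])
        thus ?thesis using bt j(1) r1 V01[of j x] by auto
      qed
      have "\<forall>k. \<exists>z. z \<in> T \<and> \<phi> j z = x \<and> 1 - 1 / (real k + 2) < F z"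
      proof
        fix k
        have "0 \<le> 1 - 1 / (real k + 2)" by (simp add: field_simps)
        moreover have "1 - 1 / (real k + 2) < V j x" using Vx by simp
        ultimately show "\<exists>z. z \<in> T \<and> \<phi> j z = x \<and> 1 - 1 / (real k + 2) < F z"
          using Vlb by blast
      qed
      then obtain zs where zs: "\<forall>k. zs k \<in> T \<and> \<phi> j (zs k) = x \<and> 1 - 1 / (real k + 2) < F (zs k)"
        by metis
      have zsu: "1 - 1 / (real k + 2) < u (zs k ! i)" if "i < m" for k i
        using zs that Fgt by blast
      have "\<forall>k. \<forall>i<m. zs k ! i \<in> K"
      proof (intro allI impI)
        fix k i assume "i < m"
        have "0 \<le> 1 - 1 / (real k + 2)" by (simp add: field_simps)
        hence "0 < u (zs k ! i)" using zsu[OF \<open>i < m\<close>, of k] by linarith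
        hence "zs k ! i \<in> S" unfolding S_def by simp
        thus "zs k ! i \<in> K" using SK by blast
      qed
      from subseq_tuples[OF Kc this] obtain r lm where
        r: "strict_mono r" "\<forall>i<m. lm i \<in> K \<and> (\<lambda>k. zs (r k) ! i) \<longlonglongrightarrow> lm i" by blast
      define z where "z = map lm [0..<m]"
      have zU: "z \<in> tuples m UNIV" "\<forall>k. zs (r k) \<in> tuples m UNIV"
        using zs unfolding z_def tuples_def T_def by auto
      have "(\<lambda>k. \<phi> j (zs (r k))) \<longlonglongrightarrow> \<phi> j z"
        using r(2) unfolding z_def by (intro seq_cont[OF cont[OF j(1)] zU[unfolded z_def]]) auto
      hence "(\<lambda>k. x) \<longlonglongrightarrow> \<phi> j z" using zs by simp
      hence phz: "\<phi> j z = x" using LIMSEQ_unique tendsto_const by blast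
      have "1 \<le> u (lm i)" if i: "i < m" for i
      proof (rule ccontr)
        assume "\<not> 1 \<le> u (lm i)"
        hence lt: "u (lm i) < 1" by simp
        define e where "e = (1 - u (lm i)) / 2"
        have e: "e > 0" using lt unfolding e_def by simp
        obtain d where d: "d > 0" "\<forall>y. dist y (lm i) < d \<longrightarrow> u y < u (lm i) + e"
          using uusc e unfolding usc_def by blast
        have ev1: "eventually (\<lambda>k. dist (zs (r k) ! i) (lm i) < d) sequentially"
          using r(2) i d(1) by (auto intro: tendstoD)
        have "eventually (\<lambda>k. 1 / (real k + 2) < e) sequentially"
        proof -
          obtain N :: nat where N: "1 / e < real N" using reals_Archimedean2 by blast
          have "1 / (real k + 2) < e" if "N \<le> k" for k
          proof -
            have "1 / e < real k + 2" using N that by linarith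
            thus ?thesis using e by (simp add: field_simps)
          qed
          thus ?thesis unfolding eventually_sequentially by blast
        qed
        with ev1 obtain k where k: "dist (zs (r k) ! i) (lm i) < d" "1 / (real k + 2) < e"
          by (metis (mono_tags, lifting) eventually_conj_iff eventually_sequentially order_refl)
        have "k \<le> r k" using r(1) by (rule seq_suble)
        hence "1 / (real (r k) + 2) \<le> 1 / (real k + 2)" by (intro divide_left_mono) auto
        hence "1 - e < u (zs (r k) ! i)" using zsu[OF i, of "r k"] k(2) by linarith
        moreover have "u (zs (r k) ! i) < u (lm i) + e" using d(2) k(1) by blast
        moreover have "2 * e = 1 - u (lm i)" unfolding e_def by simp
        ultimately show False by linarith
      qed
      hence "z \<in> tuples m C" unfolding z_def tuples_def C_def by auto
      thus "x \<in> (\<Union>j\<in>{j. j < n \<and> \<rho> j 1 = 1}. \<phi> j ` tuples m C)" using j(1) r1 phz by blast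
    qed
    have "C \<subseteq> A'"
      by (rule attr_sub[OF matI Cc A'comp(1,2) CH]) (use A'comp(3) in blast)
    with P2a show ?thesis by blast
  qed
  have P3: "u = indicator A" if I: "{j. j < n \<and> \<rho> j 1 = 1} = {..<n}"
  proof -
    have "A' \<subseteq> A"
      by (rule attr_sub[OF matI A'comp(1) Acomp(1,2)]) (use A'comp(3) Acomp(3) I in blast)+
    have "A \<subseteq> A'"
      by (rule attr_sub[OF mat Acomp(1) A'comp(1,2)]) (use A'comp(3) Acomp(3) I in blast)+
    hence "A \<subseteq> C" using P2a by blast
    show ?thesis
    proof
      fix x show "u x = indicator A x"
      proof (cases "x \<in> A")
        case True thus ?thesis using \<open>A \<subseteq> C\<close> u01[of x] unfolding C_def by auto
      next
        case False
        hence "x \<notin> S" using P1a SK by blast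
        thus ?thesis using False u01[of x] unfolding S_def by auto
      qed
    qed
  qed
  show ?thesis using P1a P1b P2a P2b P3 cut0 cut1 by blast
qed

end
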